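(* Let $a,b$ be integers with $b\ge 3$ and $a\ge 3b$. Then in the circulant graph $G_{a,b}$ the vertices $u=1$, $v=\lceil b/2\rceil$ and $w=b$ form an asteroidal triple.
   Context: For integers $a\ge 2b\ge 2$, $G_{a,b}$ is the graph with vertex set $\{0,1,\ldots,a-1\}$ in which distinct $u,v$ are adjacent if and only if $u\in\{v+b,v+b+1,\ldots,v+a-b\}$ with addition modulo $a$. Three vertices $u,v,w$ of a graph $G$ form an asteroidal triple if there exist paths $P_{uv}$ (from $u$ to $v$), $P_{vw}$ and $P_{wu}$ in $G$ such that $N_G(w)\cap V(P_{uv})=\emptyset$, $N_G(u)\cap V(P_{vw})=\emptyset$ and $N_G(v)\cap V(P_{wu})=\emptyset$, where $N_G(x)$ is the neighborhood of $x$. *)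

theory Defs
  imports Complex_Main
begin

definition is_path :: "'v set \<Rightarrow> ('v \<Rightarrow> 'v \<Rightarrow> bool) \<Rightarrow> 'v list \<Rightarrow> 'v \<Rightarrow> 'v \<Rightarrow> bool" where
  "is_path V E p x y \<longleftrightarrow> p \<noteq> [] \<and> hd p = x \<and> last p = y \<and> set p \<subseteq> V \<and> distinct p \<and>
     (\<forall>i. Suc i < length p \<longrightarrow> E (p ! i) (p ! Suc i))"

definition nbhd :: "'v set \<Rightarrow> ('v \<Rightarrow> 'v \<Rightarrow> bool) \<Rightarrow> 'v \<Rightarrow> 'v set" where
  "nbhd V E x = {y \<in> V. E x y}"

definition asteroidal_triple :: "'v set \<Rightarrow> ('v \<Rightarrow> 'v \<Rightarrow> bool) \<Rightarrow> 'v \<Rightarrow> 'v \<Rightarrow> 'v \<Rightarrow> bool" where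
  "asteroidal_triple V E u v w \<longleftrightarrow> u \<in> V \<and> v \<in> V \<and> w \<in> V \<and>
     (\<exists>Puv Pvw Pwu. is_path V E Puv u v \<and> is_path V E Pvw v w \<and> is_path V E Pwu w u \<and>
        nbhd V E w \<inter> set Puv = {} \<and> nbhd V E u \<inter> set Pvw = {} \<and> nbhd V E v \<inter> set Pwu = {})"

definition G_vert :: "nat \<Rightarrow> nat set" where
  "G_vert a = {0..<a}"

definition G_adj :: "nat \<Rightarrow> nat \<Rightarrow> nat \<Rightarrow> nat \<Rightarrow> bool" where
  "G_adj a b u v \<longleftrightarrow> u \<in> G_vert a \<and> v \<in> G_vert a \<and> u \<noteq> v \<and>
     (\<exists>k. b \<le> k \<and> k \<le> a - b \<and> u = (v + k) mod a)"

end

theory Submission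
  imports Defs
begin

lemma adj_char:
  fixes x y a b :: nat
  assumes "x < a" "y < a" "1 \<le> b" "2*b \<le> a"
  shows "(\<exists>k. b \<le> k \<and> k \<le> a - b \<and> x = (y + k) mod a) \<longleftrightarrow>
         ((y + b \<le> x \<and> x + b \<le> y + a) \<or> (x < y \<and> y + b \<le> x + a \<and> x + b \<le> y))"
proof
  assume "\<exists>k. b \<le> k \<and> k \<le> a - b \<and> x = (y + k) mod a"
  then obtain k where k: "b \<le> k" "k \<le> a - b" "x = (y + k) mod a" by blast
  show "((y + b \<le> x \<and> x + b \<le> y + a) \<or> (x < y \<and> y + b \<le> x + a \<and> x + b \<le> y))"
  proof (cases "y + k < a")
    case True
    then have "x = y + k" using k True by simp
    then show ?thesis using k assms by auto
  next
    case False
    have "y + k - a < a" using k assms by linarith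
    then have "(y + k) mod a = y + k - a" using False le_mod_geq[of a "y+k"] mod_less by simp
    then have "x = y + k - a" using k by simp
    then show ?thesis using k assms False by auto
  qed
next
  assume h: "((y + b \<le> x \<and> x + b \<le> y + a) \<or> (x < y \<and> y + b \<le> x + a \<and> x + b \<le> y))"
  show "\<exists>k. b \<le> k \<and> k \<le> a - b \<and> x = (y + k) mod a"
  proof (cases "y \<le> x")
    case True
    then show ?thesis using h assms by (intro exI[of _ "x - y"]) auto
  next
    case False
    have "(y + (x + a - y)) mod a = x" using assms False by simp
    then show ?thesis using h assms False by (intro exI[of _ "x + a - y"]) auto
  qed
qed

lemma G_adj_char:
  assumes "1 \<le> b" "2*b \<le> a"
  shows "G_adj a b x y \<longleftrightarrow> x < a \<and> y < a \<and> x \<noteq> y \<and>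
     ((y + b \<le> x \<and> x + b \<le> y + a) \<or> (x < y \<and> y + b \<le> x + a \<and> x + b \<le> y))"
  unfolding G_adj_def G_vert_def using adj_char[of x a y b] assms by auto

lemma ceil_half: "nat \<lceil>real b / 2\<rceil> = (b + 1) div 2"
proof -
  have "\<lceil>real b / 2\<rceil> = int ((b + 1) div 2)"
  proof (rule ceiling_unique)
    show "real_of_int (int ((b + 1) div 2)) - 1 < real b / 2"
      by (cases "even b") (auto elim!: evenE oddE simp: field_simps)
    show "real b / 2 \<le> real_of_int (int ((b + 1) div 2))"
      by (cases "even b") (auto elim!: evenE oddE simp: field_simps)
  qed
  then show ?thesis by simp
qed

theorem mainTheorem6:
  fixes a b :: nat
  assumes "b \<ge> 3" and "a \<ge> 3 * b"
  shows "asteroidal_triple (G_vert a) (G_adj a b) 1 (nat \<lceil>real b / 2\<rceil>) b"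
proof -
  define c where "c = (b + 1) div 2"
  have cc: "nat \<lceil>real b / 2\<rceil> = c" unfolding c_def by (rule ceil_half)
  have c2: "2 \<le> c" "c + 1 \<le> b" "b \<le> 2 * c" using assms unfolding c_def by auto
  have A: "\<And>x y. G_adj a b x y \<longleftrightarrow> x < a \<and> y < a \<and> x \<noteq> y \<and>
     ((y + b \<le> x \<and> x + b \<le> y + a) \<or> (x < y \<and> y + b \<le> x + a \<and> x + b \<le> y))"
    using G_adj_char assms by auto
  have L: "\<And>i P l. (\<forall>i. Suc i < length l \<longrightarrow> P (l!i) (l!Suc i)) \<longleftrightarrow>
       (\<forall>i < length l - 1. P (l!i) (l!Suc i))" by auto
  have p1: "is_path (G_vert a) (G_adj a b) [1, c+b, c] 1 c"
    unfolding is_path_def G_vert_def using c2 assms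
    by (auto simp: A less_Suc_eq nth_Cons split: nat.splits)
  have p2: "is_path (G_vert a) (G_adj a b) [c, a-b+2, b] c b"
    unfolding is_path_def G_vert_def using c2 assms
    by (auto simp: A less_Suc_eq nth_Cons split: nat.splits)
  have p3: "is_path (G_vert a) (G_adj a b) [b, 0, b+1, 1] b 1"
    unfolding is_path_def G_vert_def using c2 assms
    by (auto simp: A less_Suc_eq nth_Cons split: nat.splits)
  have n1: "nbhd (G_vert a) (G_adj a b) b \<inter> set [1, c+b, c] = {}"
    unfolding nbhd_def using c2 assms by (auto simp: A)
  have n2: "nbhd (G_vert a) (G_adj a b) 1 \<inter> set [c, a-b+2, b] = {}"
    unfolding nbhd_def using c2 assms by (auto simp: A)
  have n3: "nbhd (G_vert a) (G_adj a b) c \<inter> set [b, 0, b+1, 1] = {}"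
    unfolding nbhd_def using c2 assms by (auto simp: A)
  have v: "1 \<in> G_vert a" "c \<in> G_vert a" "b \<in> G_vert a" using c2 assms by (auto simp: G_vert_def)
  show ?thesis unfolding cc asteroidal_triple_def
    using p1 p2 p3 n1 n2 n3 v by blast
qed

end
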